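(* Let $L$ be a positive integer and let $a,b,s$ be integers with $a\mid L$, $b\mid L$, $0\le s<b$, $s\in\frac{ab}{\gcd(ab,L)}\mathbb{Z}$, and let $\Lambda=\begin{pmatrix} a&0\\ s&b\end{pmatrix}\mathbb{Z}_L^2$. Let $\lambda_2=b/\gcd(b,s)$ and let $\tilde\Lambda$ be the subgroup of $\mathbb{Z}_L^2$ generated by $(\lambda_2a,0)^T$ and $(0,b)^T$. Then $$\Lambda=\bigcup_{m=0}^{\lambda_2-1}\Big((am,\ sm \bmod b)^T+\tilde\Lambda\Big).$$
   Context: $\mathbb{Z}_L=\mathbb{Z}/L\mathbb{Z}$; for an integer matrix $A$, $A\mathbb{Z}_L^2=\{Az\bmod L: z\in\mathbb{Z}_L^2\}$. $\gcd(b,0)=b$. *)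

theory Defs
  imports Main
begin

text \<open>Elements of Z_L^2 are represented by pairs of integers reduced mod L,
  i.e. by their canonical representatives in {0..L-1}^2.\<close>

definition red2 :: "int \<Rightarrow> int \<times> int \<Rightarrow> int \<times> int" where
  "red2 L v = (fst v mod L, snd v mod L)"

definition lat_img :: "int \<Rightarrow> int \<Rightarrow> int \<Rightarrow> int \<Rightarrow> (int \<times> int) set" where
  "lat_img L a s b =
     {red2 L (a * z1, s * z1 + b * z2) | z1 z2. z1 \<in> {0..<L} \<and> z2 \<in> {0..<L}}"

definition subgrp2 :: "int \<Rightarrow> int \<times> int \<Rightarrow> int \<times> int \<Rightarrow> (int \<times> int) set" where
  "subgrp2 L v w =
     {red2 L (k1 * fst v + k2 * fst w, k1 * snd v + k2 * snd w) | k1 k2. True}"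

definition coset2 :: "int \<Rightarrow> int \<times> int \<Rightarrow> (int \<times> int) set \<Rightarrow> (int \<times> int) set" where
  "coset2 L u H = {red2 L (fst u + fst h, snd u + snd h) | h. h \<in> H}"

end

theory Submission
  imports Defs
begin

lemma lat_img_all:
  assumes "L > 0"
  shows "lat_img L a s b = {red2 L (a*z1, s*z1+b*z2) | z1 z2. True}"
proof (intro set_eqI iffI)
  fix x assume "x \<in> lat_img L a s b" thus "x \<in> {red2 L (a*z1, s*z1+b*z2) | z1 z2. True}"
    unfolding lat_img_def by blast
next
  fix x assume "x \<in> {red2 L (a*z1, s*z1+b*z2) | z1 z2. True}"
  then obtain z1 z2 where x: "x = red2 L (a*z1, s*z1+b*z2)" by blast
  have e1: "(a * (z1 mod L)) mod L = (a*z1) mod L" by (simp add: mod_mult_right_eq)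
  have e2: "(s * (z1 mod L) + b * (z2 mod L)) mod L = (s*z1+b*z2) mod L"
    by (metis mod_add_eq mod_mult_right_eq)
  have "x = red2 L (a * (z1 mod L), s * (z1 mod L) + b * (z2 mod L))"
    using x e1 e2 by (simp add: red2_def)
  moreover have "z1 mod L \<in> {0..<L}" "z2 mod L \<in> {0..<L}" using assms by auto
  ultimately show "x \<in> lat_img L a s b" unfolding lat_img_def by blast
qed

lemma coset_sub:
  "coset2 L u (subgrp2 L v w) =
   {red2 L (fst u + (k1 * fst v + k2 * fst w), snd u + (k1 * snd v + k2 * snd w)) | k1 k2. True}"
proof (intro set_eqI iffI)
  fix x assume "x \<in> coset2 L u (subgrp2 L v w)"
  then obtain k1 k2 where "x = red2 L (fst u + fst (red2 L (k1 * fst v + k2 * fst w, k1 * snd v + k2 * snd w)),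
      snd u + snd (red2 L (k1 * fst v + k2 * fst w, k1 * snd v + k2 * snd w)))"
    unfolding coset2_def subgrp2_def by blast
  hence "x = red2 L (fst u + (k1 * fst v + k2 * fst w), snd u + (k1 * snd v + k2 * snd w))"
    by (simp add: red2_def mod_add_right_eq)
  thus "x \<in> {red2 L (fst u + (k1 * fst v + k2 * fst w), snd u + (k1 * snd v + k2 * snd w)) | k1 k2. True}"
    by blast
next
  fix x assume "x \<in> {red2 L (fst u + (k1 * fst v + k2 * fst w), snd u + (k1 * snd v + k2 * snd w)) | k1 k2. True}"
  then obtain k1 k2 where "x = red2 L (fst u + (k1 * fst v + k2 * fst w), snd u + (k1 * snd v + k2 * snd w))"
    by blast
  hence "x = red2 L (fst u + fst (red2 L (k1 * fst v + k2 * fst w, k1 * snd v + k2 * snd w)),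
      snd u + snd (red2 L (k1 * fst v + k2 * fst w, k1 * snd v + k2 * snd w)))"
    by (simp add: red2_def mod_add_right_eq)
  moreover have "red2 L (k1 * fst v + k2 * fst w, k1 * snd v + k2 * snd w) \<in> subgrp2 L v w"
    unfolding subgrp2_def by blast
  ultimately show "x \<in> coset2 L u (subgrp2 L v w)" unfolding coset2_def by blast
qed

theorem proposition3p1:
  fixes L a b s :: int
  assumes "L > 0" and "a dvd L" and "b dvd L"
    and "0 \<le> s" and "s < b"
    and "(a * b div gcd (a * b) L) dvd s"
  shows "lat_img L a s b =
    (\<Union>m\<in>{0..b div gcd b s - 1}.
       coset2 L (a * m, s * m mod b)
         (subgrp2 L ((b div gcd b s) * a, 0) (0, b)))"
proof -
  define g where "g = gcd b s"
  define l where "l = b div g"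
  have bpos: "b > 0" using assms by simp
  have gpos: "g > 0" using bpos g_def by simp
  have bl: "b = l * g" unfolding l_def g_def by simp
  obtain t where st: "s = g * t" using gcd_dvd2[of b s] unfolding g_def dvd_def by blast
  have lpos: "l > 0" using bl bpos gpos by (simp add: zero_less_mult_iff)
  have ls: "l * s = b * t" using bl st by simp
  have cs: "\<And>m. coset2 L (a * m, s * m mod b) (subgrp2 L (l * a, 0) (0, b)) =
      {red2 L (a*m + k1*(l*a), s*m mod b + k2*b) | k1 k2. True}"
    unfolding coset_sub by simp
  have "lat_img L a s b = (\<Union>m\<in>{0..l - 1}. coset2 L (a * m, s * m mod b) (subgrp2 L (l * a, 0) (0, b)))"
    unfolding lat_img_all[OF assms(1)] cs
  proof (intro set_eqI iffI)
    fix x assume "x \<in> {red2 L (a*z1, s*z1+b*z2) | z1 z2. True}"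
    then obtain z1 z2 where x: "x = red2 L (a*z1, s*z1+b*z2)" by blast
    define m where "m = z1 mod l"
    define q where "q = z1 div l"
    have z1: "z1 = q*l + m" unfolding m_def q_def by simp
    have mr: "m \<in> {0..l-1}" unfolding m_def using lpos by auto
    define k2 where "k2 = q*t + z2 + s*m div b"
    have e1: "a*z1 = a*m + q*(l*a)" using z1 by (simp add: algebra_simps)
    have e2: "s*z1+b*z2 = s*m mod b + k2*b"
    proof -
      have "s*z1 = s*m + q*(l*s)" using z1 by (simp add: algebra_simps)
      also have "\<dots> = s*m mod b + b*(s*m div b) + q*(b*t)" using ls by simp
      finally show ?thesis unfolding k2_def by (simp add: algebra_simps)
    qed
    have "x \<in> {red2 L (a*m + k1*(l*a), s*m mod b + k2*b) | k1 k2. True}"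
      unfolding mem_Collect_eq x e1 e2 by (rule exI[of _ q], rule exI[of _ k2], simp)
    thus "x \<in> (\<Union>m\<in>{0..l - 1}. {red2 L (a*m + k1*(l*a), s*m mod b + k2*b) | k1 k2. True})"
      by (rule UN_I[OF mr])
  next
    fix x assume "x \<in> (\<Union>m\<in>{0..l - 1}. {red2 L (a*m + k1*(l*a), s*m mod b + k2*b) | k1 k2. True})"
    then obtain m where "x \<in> {red2 L (a*m + k1*(l*a), s*m mod b + k2*b) | k1 k2. True}" by (rule UN_E)
    then obtain q k2 where x: "x = red2 L (a*m + q*(l*a), s*m mod b + k2*b)" by blast
    define z1 where "z1 = m + q*l"
    define z2 where "z2 = k2 - s*m div b - q*t"
    have e1: "a*z1 = a*m + q*(l*a)" unfolding z1_def by (simp add: algebra_simps)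
    have e2: "s*z1 + b*z2 = s*m mod b + k2*b"
    proof -
      have "s*z1 = s*m + q*(l*s)" unfolding z1_def by (simp add: algebra_simps)
      also have "\<dots> = s*m mod b + b*(s*m div b) + q*(b*t)" using ls by simp
      finally show ?thesis unfolding z2_def by (simp add: algebra_simps)
    qed
    show "x \<in> {red2 L (a*z1, s*z1+b*z2) | z1 z2. True}"
      unfolding mem_Collect_eq x e1[symmetric] e2[symmetric] by blast
  qed
  thus ?thesis unfolding l_def g_def .
qed

end
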